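(* Let $Q$ be a connected natural join query over binary relations $R_1,\dots,R_\ell$, and let $J$ be a database instance together with a designation, for each relation $R_i$, of one of its two attributes as its light attribute. Run the join-ordering procedure described in the context on $(Q,J)$, resolving every nondeterministic choice arbitrarily. Then the procedure terminates. At termination the collection $\mathcal{C}$ contains exactly one component $(c,T_c)$, and $T_c=Q(J)$, i.e. $T_c$ is the natural join of all relations $R_1^J,\dots,R_\ell^J$.
   Context: A natural join query over binary relations consists of relation symbols $R_1,\dots,R_\ell$, each having exactly two distinct attributes. The answer $Q(J)$ on an instance $J$ is the natural join of all $R_i^J$. Relations are sets of tuples, so there are no duplicates. The query graph has one vertex per attribute and one edge $\{A,B\}$ per relation $R(A,B)$. $Q$ is connected if its query graph is connected. Join-ordering procedure. It maintains a collection $\mathcal{C}$ of components $(c,T_c)$, where $c$ is a set of attributes and $T_c$ is a relation over attribute set $c$. Initially $\mathcal{C}=\emptyset$ and every relation is marked unused. Outer loop: while there exist an attribute $X$ that lies in no component's attribute set and an unused relation $R$ whose light attribute is $X$, do the following four steps. (i) Let $Y$ be the other attribute of $R$. Set $c:=\{X,Y\}$ and $T_c:=R^J$, and mark $R$ used. (ii) While there is an unused relation $R'$ whose light attribute lies in $c$: set $T_c:=T_c\bowtie R'^J$, set $c:=c\cup\operatorname{attr}(R')$, and mark $R'$ used. Such a join is called a light join. (iii) While there is a component $(c',T_{c'})\in\mathcal{C}$ with $c\cap c'\neq\emptyset$: set $T_c:=T_c\bowtie T_{c'}$, set $c:=c\cup c'$, and remove $(c',T_{c'})$ from $\mathcal{C}$.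 (iv) Add $(c,T_c)$ to $\mathcal{C}$. When the outer loop ends, the procedure outputs $T_c$ for the component in $\mathcal{C}$. *)

theory Defs
  imports Main
begin

text \<open>A tuple over an attribute set c is a
map t :: 'a \<rightharpoonup> 'v with dom t = c; a relation is a set of such tuples.
The query has relation symbols R_0, ..., R_(l-1) (indices i < l); relation R_i has the
two distinct attributes A i and B i; J i is its instance relation; light i is its light
attribute.\<close>

type_synonym ('a, 'v) tuple = "'a \<rightharpoonup> 'v"
type_synonym ('a, 'v) rel = "('a, 'v) tuple set"

definition attrs :: "('i \<Rightarrow> 'a) \<Rightarrow> ('i \<Rightarrow> 'a) \<Rightarrow> 'i \<Rightarrow> 'a set" where
  "attrs A B i = {A i, B i}"

definition njoin :: "'a set \<Rightarrow> ('a, 'v) rel \<Rightarrow> 'a set \<Rightarrow> ('a, 'v) rel \<Rightarrow> ('a, 'v) rel" where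
  "njoin c1 T1 c2 T2 = {t. dom t = c1 \<union> c2 \<and> t |` c1 \<in> T1 \<and> t |` c2 \<in> T2}"

definition query_answer :: "nat \<Rightarrow> (nat \<Rightarrow> 'a) \<Rightarrow> (nat \<Rightarrow> 'a) \<Rightarrow> (nat \<Rightarrow> ('a, 'v) rel) \<Rightarrow> ('a, 'v) rel" where
  "query_answer l A B J =
     {t. dom t = (\<Union>i<l. attrs A B i) \<and> (\<forall>i<l. t |` attrs A B i \<in> J i)}"

definition query_connected :: "nat \<Rightarrow> (nat \<Rightarrow> 'a) \<Rightarrow> (nat \<Rightarrow> 'a) \<Rightarrow> bool" where
  "query_connected l A B \<longleftrightarrow>
     (\<forall>x\<in>(\<Union>i<l. attrs A B i). \<forall>y\<in>(\<Union>i<l. attrs A B i).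
        (x, y) \<in> ({(A i, B i) | i. i < l} \<union> {(B i, A i) | i. i < l})\<^sup>*)"

text \<open>States of the join-ordering procedure.  comps is the collection C (as a list,
so multiplicities are visible); used the set of used relation indices; cur the component
currently being built in steps (i)-(iv), with the phase: LightPh = inside loop (ii),
MergePh = inside loop (iii).  cur = None means: at the head of the outer loop.\<close>

datatype phase = LightPh | MergePh

record ('a, 'v) jstate =
  comps :: "('a set \<times> ('a, 'v) rel) list"
  used :: "nat set"
  cur :: "(phase \<times> 'a set \<times> ('a, 'v) rel) option"

definition init_state :: "('a, 'v) jstate" where
  "init_state = \<lparr>comps = [], used = {}, cur = None\<rparr>"

definition comp_attrs :: "('a, 'v) jstate \<Rightarrow> 'a set" where
  "comp_attrs s = (\<Union>p\<in>set (comps s). fst p)"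

definition remove_nth :: "nat \<Rightarrow> 'b list \<Rightarrow> 'b list" where
  "remove_nth k xs = take k xs @ drop (Suc k) xs"

inductive jstep :: "nat \<Rightarrow> (nat \<Rightarrow> 'a) \<Rightarrow> (nat \<Rightarrow> 'a) \<Rightarrow> (nat \<Rightarrow> 'a) \<Rightarrow> (nat \<Rightarrow> ('a, 'v) rel)
                    \<Rightarrow> ('a, 'v) jstate \<Rightarrow> ('a, 'v) jstate \<Rightarrow> bool"
  for l A B light J where
  \<comment> \<open>outer loop guard + step (i)\<close>
  start: "\<lbrakk> cur s = None; i < l; i \<notin> used s; light i \<notin> comp_attrs s \<rbrakk> \<Longrightarrow>
     jstep l A B light J s
       (s\<lparr>used := insert i (used s), cur := Some (LightPh, attrs A B i, J i)\<rparr>)"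
  \<comment> \<open>step (ii): a light join\<close>
| light_join: "\<lbrakk> cur s = Some (LightPh, c, T); i < l; i \<notin> used s; light i \<in> c \<rbrakk> \<Longrightarrow>
     jstep l A B light J s
       (s\<lparr>used := insert i (used s),
          cur := Some (LightPh, c \<union> attrs A B i, njoin c T (attrs A B i) (J i))\<rparr>)"
  \<comment> \<open>loop (ii) ends\<close>
| end_light: "\<lbrakk> cur s = Some (LightPh, c, T);
                 \<not> (\<exists>i<l. i \<notin> used s \<and> light i \<in> c) \<rbrakk> \<Longrightarrow>
     jstep l A B light J s (s\<lparr>cur := Some (MergePh, c, T)\<rparr>)"
  \<comment> \<open>step (iii): merge with an intersecting component\<close>
| merge: "\<lbrakk> cur s = Some (MergePh, c, T); k < length (comps s); comps s ! k = (c', T');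
             c \<inter> c' \<noteq> {} \<rbrakk> \<Longrightarrow>
     jstep l A B light J s
       (s\<lparr>comps := remove_nth k (comps s), cur := Some (MergePh, c \<union> c', njoin c T c' T')\<rparr>)"
  \<comment> \<open>loop (iii) ends; step (iv)\<close>
| finish: "\<lbrakk> cur s = Some (MergePh, c, T);
              \<not> (\<exists>p\<in>set (comps s). c \<inter> fst p \<noteq> {}) \<rbrakk> \<Longrightarrow>
     jstep l A B light J s (s\<lparr>comps := comps s @ [(c, T)], cur := None\<rparr>)"

end

theory Submission
  imports Defs
begin

definition jn :: "(nat \<Rightarrow> 'a) \<Rightarrow> (nat \<Rightarrow> 'a) \<Rightarrow> (nat \<Rightarrow> ('a, 'v) rel) \<Rightarrow> nat set \<Rightarrow> 'a set \<Rightarrow> ('a, 'v) rel" where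
  "jn A B J S c = {t. dom t = c \<and> (\<forall>i\<in>S. t |` attrs A B i \<in> J i)}"

definition PP :: "nat \<Rightarrow> (nat \<Rightarrow> 'a) \<Rightarrow> (nat \<Rightarrow> 'a) \<Rightarrow> (nat \<Rightarrow> ('a, 'v) rel) \<Rightarrow> 'a set \<times> ('a, 'v) rel \<Rightarrow> bool" where
  "PP l A B J p \<longleftrightarrow> (\<exists>S\<subseteq>{..<l}. fst p = \<Union>(attrs A B ` S) \<and> snd p = jn A B J S (fst p)) \<and> fst p \<noteq> {}"

definition good :: "(nat \<Rightarrow> 'a) \<Rightarrow> (nat \<Rightarrow> 'a) \<Rightarrow> (nat \<Rightarrow> ('a, 'v) rel) \<Rightarrow> nat \<Rightarrow> 'a set \<times> ('a, 'v) rel \<Rightarrow> bool" where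
  "good A B J i p \<longleftrightarrow> attrs A B i \<subseteq> fst p \<and> (\<forall>t\<in>snd p. t |` attrs A B i \<in> J i)"

definition jinv :: "nat \<Rightarrow> (nat \<Rightarrow> 'a) \<Rightarrow> (nat \<Rightarrow> 'a) \<Rightarrow> (nat \<Rightarrow> 'a) \<Rightarrow> (nat \<Rightarrow> ('a, 'v) rel) \<Rightarrow> ('a, 'v) jstate \<Rightarrow> bool" where
  "jinv l A B light J s \<longleftrightarrow>
   (\<forall>p\<in>set (comps s). PP l A B J p) \<and>
   (\<forall>ph c T. cur s = Some (ph,c,T) \<longrightarrow> PP l A B J (c,T)) \<and>
   (\<forall>i\<in>used s. (\<exists>ph c T. cur s = Some (ph,c,T) \<and> good A B J i (c,T)) \<or> (\<exists>p\<in>set (comps s). good A B J i p)) \<and>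
   (\<forall>p\<in>set (comps s). \<forall>i<l. i \<notin> used s \<longrightarrow> light i \<notin> fst p) \<and>
   (\<forall>c T. cur s = Some (MergePh,c,T) \<longrightarrow> (\<forall>i<l. i \<notin> used s \<longrightarrow> light i \<notin> c)) \<and>
   distinct (comps s) \<and>
   (\<forall>p\<in>set (comps s). \<forall>q\<in>set (comps s). p \<noteq> q \<longrightarrow> fst p \<inter> fst q = {})"

lemma restr2: "a \<subseteq> c \<Longrightarrow> (t |` c) |` a = t |` a"
  by (simp add: Int_absorb1)

lemma njoin_jn:
  assumes "c1 = \<Union>(attrs A B ` S1)" "c2 = \<Union>(attrs A B ` S2)"
  shows "njoin c1 (jn A B J S1 c1) c2 (jn A B J S2 c2) = jn A B J (S1 \<union> S2) (c1 \<union> c2)"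
proof -
  have a1: "\<And>i. i \<in> S1 \<Longrightarrow> c1 \<inter> attrs A B i = attrs A B i" using assms by auto
  have a2: "\<And>i. i \<in> S2 \<Longrightarrow> c2 \<inter> attrs A B i = attrs A B i" using assms by auto
  show ?thesis
    unfolding njoin_def jn_def
    using a1 a2 by (auto simp: restr2 dom_restrict)
qed

lemma good_njoin1: "good A B J i (c1, T1) \<Longrightarrow> good A B J i (c1 \<union> c2, njoin c1 T1 c2 T2)"
  unfolding good_def njoin_def by (auto simp: restr2) (metis restr2)

lemma good_njoin2: "good A B J i (c2, T2) \<Longrightarrow> good A B J i (c1 \<union> c2, njoin c1 T1 c2 T2)"
  unfolding good_def njoin_def by (auto simp: restr2) (metis restr2)

lemma PP_njoin: "PP l A B J (c1, T1) \<Longrightarrow> PP l A B J (c2, T2) \<Longrightarrow> PP l A B J (c1 \<union> c2, njoin c1 T1 c2 T2)"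
proof -
  assume p1: "PP l A B J (c1, T1)" and p2: "PP l A B J (c2, T2)"
  obtain S1 where h1: "S1 \<subseteq> {..<l}" "c1 = \<Union>(attrs A B ` S1)" "T1 = jn A B J S1 c1" "c1 \<noteq> {}"
    using p1 unfolding PP_def by auto
  obtain S2 where h2: "S2 \<subseteq> {..<l}" "c2 = \<Union>(attrs A B ` S2)" "T2 = jn A B J S2 c2"
    using p2 unfolding PP_def by auto
  have "S1 \<union> S2 \<subseteq> {..<l}" "c1 \<union> c2 = \<Union>(attrs A B ` (S1 \<union> S2))"
    "njoin c1 T1 c2 T2 = jn A B J (S1 \<union> S2) (c1 \<union> c2)"
    using h1 h2 njoin_jn[OF h1(2) h2(2), of J] by auto
  then show ?thesis unfolding PP_def fst_conv snd_conv
    using h1(4) by blast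
qed

lemma remove_nth_sub: "set (remove_nth k xs) \<subseteq> set xs"
  unfolding remove_nth_def by (auto dest: in_set_takeD in_set_dropD)

lemma remove_nth_sup: "k < length xs \<Longrightarrow> set xs \<subseteq> insert (xs ! k) (set (remove_nth k xs))"
proof -
  assume k: "k < length xs"
  have "set xs = set (take k xs @ xs ! k # drop (Suc k) xs)"
    using arg_cong[OF id_take_nth_drop[OF k], of set] .
  then show ?thesis unfolding remove_nth_def by auto
qed

lemma remove_nth_distinct: "distinct xs \<Longrightarrow> distinct (remove_nth k xs)"
proof -
  assume d: "distinct xs"
  have d2: "distinct (take (Suc k) xs @ drop (Suc k) xs)" using d by simp
  have sub: "set (take k xs) \<subseteq> set (take (Suc k) xs)" by (rule set_take_subset_set_take) simp
  show ?thesis unfolding remove_nth_def distinct_append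
    using d2 sub distinct_take[OF d, of k] unfolding distinct_append by auto
qed

lemma restr_dom: "t |` dom t = t"
  by (rule ext) (auto simp: restrict_map_def dom_def)

lemma disj_sub: "\<forall>p\<in>X. \<forall>q\<in>X. p \<noteq> q \<longrightarrow> fst p \<inter> fst q = {} \<Longrightarrow> Y \<subseteq> X \<Longrightarrow>
   \<forall>p\<in>Y. \<forall>q\<in>Y. p \<noteq> q \<longrightarrow> fst p \<inter> fst q = {}"
  by blast

lemma jn_single:
  assumes "\<forall>t\<in>J i. dom t = {A i, B i}"
  shows "J i = jn A B J {i} (attrs A B i)"
proof
  show "J i \<subseteq> jn A B J {i} (attrs A B i)"
  proof
    fix t assume t: "t \<in> J i"
    then have d: "dom t = attrs A B i" using assms by (simp add: attrs_def)
    then have "t |` attrs A B i = t" using restr_dom by metis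
    then show "t \<in> jn A B J {i} (attrs A B i)" using t d unfolding jn_def mem_Collect_eq by simp
  qed
  show "jn A B J {i} (attrs A B i) \<subseteq> J i"
  proof
    fix t assume "t \<in> jn A B J {i} (attrs A B i)"
    then have "dom t = attrs A B i" "t |` attrs A B i \<in> J i" unfolding jn_def mem_Collect_eq by auto
    then show "t \<in> J i" using restr_dom by metis
  qed
qed

lemma good_single:
  assumes "\<forall>t\<in>J i. dom t = {A i, B i}"
  shows "good A B J i (attrs A B i, J i)"
  unfolding good_def fst_conv snd_conv
proof (intro conjI ballI subset_refl)
  fix t assume t: "t \<in> J i"
  then have d: "dom t = attrs A B i" using assms by (simp add: attrs_def)
  then have "t |` attrs A B i = t" using restr_dom by metis
  then show "t |` attrs A B i \<in> J i" using t by simp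
qed

lemma PP_single:
  assumes "\<forall>t\<in>J i. dom t = {A i, B i}" "i < l"
  shows "PP l A B J (attrs A B i, J i)"
  unfolding PP_def using jn_single[of J i A B, OF assms(1)] assms(2)
  by (auto simp: attrs_def intro!: exI[of _ "{i}"])

lemma jinv_init: "jinv l A B light J init_state"
  unfolding jinv_def init_state_def by simp

lemma jinv_step:
  assumes "jstep l A B light J s s'" "jinv l A B light J s"
    and inst: "\<forall>i<l. \<forall>t\<in>J i. dom t = {A i, B i}"
  shows "jinv l A B light J s'"
  using assms(1,2)
proof (induction rule: jstep.induct)
  case (start s i)
  then show ?case
    using PP_single[of J i A B l] good_single[of J i A B] inst
    unfolding jinv_def comp_attrs_def by auto
next
  case (light_join s c T i)
  have pc: "PP l A B J (c, T)" using light_join unfolding jinv_def by auto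
  have pn: "PP l A B J (c \<union> attrs A B i, njoin c T (attrs A B i) (J i))"
    using PP_njoin[OF pc PP_single[of J i A B l]] inst light_join by auto
  have gn: "good A B J i (c \<union> attrs A B i, njoin c T (attrs A B i) (J i))"
    using good_njoin2 good_single[of J i A B] inst light_join by auto
  show ?case using light_join pn gn good_njoin1[of A B J _ c T]
    unfolding jinv_def by auto
next
  case (end_light s c T)
  then show ?case unfolding jinv_def by auto
next
  case (merge s c T k c' T')
  have mem: "(c', T') \<in> set (comps s)" using merge by (metis nth_mem)
  have pc: "PP l A B J (c, T)" using merge unfolding jinv_def by auto
  have pc': "PP l A B J (c', T')" using merge mem unfolding jinv_def by auto
  have pn: "PP l A B J (c \<union> c', njoin c T c' T')" using PP_njoin[OF pc pc'] .
  have sub: "set (remove_nth k (comps s)) \<subseteq> set (comps s)" by (rule remove_nth_sub)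
  have sup: "set (comps s) \<subseteq> insert (c', T') (set (remove_nth k (comps s)))"
    using remove_nth_sup[OF merge(2)] merge(3) by simp
  have I: "jinv l A B light J s" by fact
  show ?case
    unfolding jinv_def
  proof (intro conjI)
    show "\<forall>p\<in>set (comps (s\<lparr>comps := remove_nth k (comps s), cur := Some (MergePh, c \<union> c', njoin c T c' T')\<rparr>)). PP l A B J p"
      using I sub unfolding jinv_def by auto
    show "\<forall>ph ca Ta. cur (s\<lparr>comps := remove_nth k (comps s), cur := Some (MergePh, c \<union> c', njoin c T c' T')\<rparr>) = Some (ph, ca, Ta) \<longrightarrow> PP l A B J (ca, Ta)"
      using pn by simp
    show "\<forall>i\<in>used (s\<lparr>comps := remove_nth k (comps s), cur := Some (MergePh, c \<union> c', njoin c T c' T')\<rparr>).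
       (\<exists>ph ca Ta. cur (s\<lparr>comps := remove_nth k (comps s), cur := Some (MergePh, c \<union> c', njoin c T c' T')\<rparr>) = Some (ph, ca, Ta) \<and> good A B J i (ca, Ta)) \<or>
       (\<exists>p\<in>set (comps (s\<lparr>comps := remove_nth k (comps s), cur := Some (MergePh, c \<union> c', njoin c T c' T')\<rparr>)). good A B J i p)"
    proof
      fix i assume "i \<in> used (s\<lparr>comps := remove_nth k (comps s), cur := Some (MergePh, c \<union> c', njoin c T c' T')\<rparr>)"
      then have iu: "i \<in> used s" by simp
      then have "good A B J i (c, T) \<or> (\<exists>p\<in>set (comps s). good A B J i p)"
        using I merge(1) unfolding jinv_def by auto
      then have "good A B J i (c \<union> c', njoin c T c' T') \<or> (\<exists>p\<in>set (remove_nth k (comps s)). good A B J i p)"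
        using sup good_njoin1[of A B J i c T c' T'] good_njoin2[of A B J i c' T' c T] by auto
      then show "(\<exists>ph ca Ta. cur (s\<lparr>comps := remove_nth k (comps s), cur := Some (MergePh, c \<union> c', njoin c T c' T')\<rparr>) = Some (ph, ca, Ta) \<and> good A B J i (ca, Ta)) \<or>
       (\<exists>p\<in>set (comps (s\<lparr>comps := remove_nth k (comps s), cur := Some (MergePh, c \<union> c', njoin c T c' T')\<rparr>)). good A B J i p)"
        by auto
    qed
    show "\<forall>p\<in>set (comps (s\<lparr>comps := remove_nth k (comps s), cur := Some (MergePh, c \<union> c', njoin c T c' T')\<rparr>)).
       \<forall>i<l. i \<notin> used (s\<lparr>comps := remove_nth k (comps s), cur := Some (MergePh, c \<union> c', njoin c T c' T')\<rparr>) \<longrightarrow> light i \<notin> fst p"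
      using I sub unfolding jinv_def by auto
    show "\<forall>ca Ta. cur (s\<lparr>comps := remove_nth k (comps s), cur := Some (MergePh, c \<union> c', njoin c T c' T')\<rparr>) = Some (MergePh, ca, Ta) \<longrightarrow>
        (\<forall>i<l. i \<notin> used (s\<lparr>comps := remove_nth k (comps s), cur := Some (MergePh, c \<union> c', njoin c T c' T')\<rparr>) \<longrightarrow> light i \<notin> ca)"
      using I merge(1) mem unfolding jinv_def by fastforce
    show "distinct (comps (s\<lparr>comps := remove_nth k (comps s), cur := Some (MergePh, c \<union> c', njoin c T c' T')\<rparr>))"
      using I remove_nth_distinct unfolding jinv_def by auto
    show "\<forall>p\<in>set (comps (s\<lparr>comps := remove_nth k (comps s), cur := Some (MergePh, c \<union> c', njoin c T c' T')\<rparr>)).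
       \<forall>q\<in>set (comps (s\<lparr>comps := remove_nth k (comps s), cur := Some (MergePh, c \<union> c', njoin c T c' T')\<rparr>)). p \<noteq> q \<longrightarrow> fst p \<inter> fst q = {}"
    proof -
      have D: "\<forall>p\<in>set (comps s). \<forall>q\<in>set (comps s). p \<noteq> q \<longrightarrow> fst p \<inter> fst q = {}"
        using I unfolding jinv_def by blast
      show ?thesis using disj_sub[OF D sub] by simp
    qed
  qed
next
  case (finish s c T)
  have I: "jinv l A B light J s" by fact
  have pc: "PP l A B J (c, T)" using finish unfolding jinv_def by auto
  then have cne: "c \<noteq> {}" unfolding PP_def by auto
  have nin: "(c, T) \<notin> set (comps s)" using finish(2) cne by auto
  show ?case
    using I finish pc nin unfolding jinv_def
    by (auto simp: Int_commute)
qed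

definition meas :: "nat \<Rightarrow> ('a, 'v) jstate \<Rightarrow> nat \<times> nat" where
  "meas l s = (card ({..<l} - used s),
     (case cur s of None \<Rightarrow> 0 | Some (LightPh, _, _) \<Rightarrow> length (comps s) + 2
        | Some (MergePh, _, _) \<Rightarrow> length (comps s) + 1))"

lemma card_dec: "(i::nat) < l \<Longrightarrow> i \<notin> U \<Longrightarrow> card ({..<l} - insert i U) < card ({..<l} - U)"
proof (rule psubset_card_mono)
  show "finite ({..<l} - U)" by simp
qed auto

lemma step_meas:
  assumes "jstep l A B light J s s'"
  shows "(meas l s', meas l s) \<in> less_than <*lex*> less_than"
  using assms
proof (induction rule: jstep.induct)
  case (start s i)
  then show ?case using card_dec[of i l "used s"] by (simp add: meas_def)
next
  case (light_join s c T i)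
  then show ?case using card_dec[of i l "used s"] by (simp add: meas_def)
next
  case (end_light s c T)
  then show ?case by (simp add: meas_def)
next
  case (merge s c T k c' T')
  then show ?case by (simp add: meas_def remove_nth_def)
next
  case (finish s c T)
  then show ?case by (simp add: meas_def)
qed

lemma no_inf:
  "\<nexists>f. f 0 = init_state \<and> (\<forall>n. jstep l A B light J (f n) (f (Suc n)))"
proof
  assume "\<exists>f. f 0 = init_state \<and> (\<forall>n. jstep l A B light J (f n) (f (Suc n)))"
  then obtain f where f: "\<forall>n. jstep l A B light J (f n) (f (Suc n))" by blast
  let ?R = "inv_image (less_than <*lex*> less_than) (meas l)"
  have "wf ?R" by (intro wf_inv_image wf_lex_prod wf_less_than)
  moreover have "\<forall>n. (f (Suc n), f n) \<in> ?R"
  proof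
    fix n show "(f (Suc n), f n) \<in> ?R" using step_meas[OF f[rule_format, of n]] by simp
  qed
  ultimately show False using wf_iff_no_infinite_down_chain by blast
qed



lemma reach_inv:
  assumes "(jstep l A B light J)\<^sup>*\<^sup>* init_state s"
    and inst: "\<forall>i<l. \<forall>t\<in>J i. dom t = {A i, B i}"
  shows "jinv l A B light J s"
  using assms(1)
  by (induction rule: rtranclp_induct) (auto intro: jinv_init jinv_step[OF _ _ inst])

lemma stuck_cur:
  assumes "\<nexists>s'. jstep l A B light J s s'"
  shows "cur s = None"
proof (rule ccontr)
  assume "cur s \<noteq> None"
  then obtain ph c T where cs: "cur s = Some (ph, c, T)" by auto
  show False
  proof (cases ph)
    case LightPh
    show False
    proof (cases "\<exists>i<l. i \<notin> used s \<and> light i \<in> c")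
      case True
      then obtain i where "i < l" "i \<notin> used s" "light i \<in> c" by blast
      then show False using assms jstep.light_join[of s c T i l light] cs LightPh by blast
    next
      case False
      then show False using assms jstep.end_light[of s c T l light] cs LightPh by blast
    qed
  next
    case MergePh
    show False
    proof (cases "\<exists>p\<in>set (comps s). c \<inter> fst p \<noteq> {}")
      case True
      then obtain p where p: "p \<in> set (comps s)" "c \<inter> fst p \<noteq> {}" by blast
      then obtain k where k: "k < length (comps s)" "comps s ! k = p" by (meson in_set_conv_nth)
      obtain c' T' where "p = (c', T')" by fastforce
      then have "comps s ! k = (c', T')" "c \<inter> c' \<noteq> {}" using k p by auto
      then show False using assms jstep.merge[of s c T k c' T' l A B light J] cs MergePh k(1) by blast
    next
      case False
      then show False using assms jstep.finish[of s c T] cs MergePh by blast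
    qed
  qed
qed

lemma single_list:
  assumes "distinct xs" "xs \<noteq> []" "\<forall>p\<in>set xs. \<forall>q\<in>set xs. p = q"
  shows "xs = [hd xs]"
proof (cases xs)
  case Nil then show ?thesis using assms by simp
next
  case (Cons a ys)
  have "ys = []"
  proof (rule ccontr)
    assume "ys \<noteq> []"
    then obtain b zs where bz: "ys = b # zs" by (cases ys) auto
    then have "a \<in> set xs" "b \<in> set xs" using Cons by auto
    then have "a = b" using assms(3) by blast
    then show False using assms(1) Cons bz by simp
  qed
  then show ?thesis using Cons by simp
qed

lemma conn_prop:
  assumes "(x, y) \<in> ({(A i, B i) | i. i < l} \<union> {(B i, A i) | i. i < l})\<^sup>*"
    and "x \<in> fst p" "p \<in> set cs"
    and allgood: "\<forall>i<l. \<exists>q\<in>set cs. attrs A B i \<subseteq> fst q"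
    and disj: "\<forall>p\<in>set cs. \<forall>q\<in>set cs. p \<noteq> q \<longrightarrow> fst p \<inter> fst q = {}"
  shows "y \<in> fst p"
  using assms(1,2)
proof (induction rule: rtrancl_induct)
  case base
  then show ?case by simp
next
  case (step y z)
  then obtain i where i: "i < l" "{y, z} = attrs A B i"
    by (auto simp: attrs_def)
  then obtain q where q: "q \<in> set cs" "attrs A B i \<subseteq> fst q" using allgood by blast
  have "y \<in> fst q" "z \<in> fst q" using q i by auto
  then have "q = p" using disj q(1) assms(3) step by blast
  then show ?case using \<open>z \<in> fst q\<close> by simp
qed

theorem mainTheorem1:
  fixes l :: nat and A B light :: "nat \<Rightarrow> 'a" and J :: "nat \<Rightarrow> ('a, 'v) rel"
  assumes nonempty: "l \<ge> 1"
    and binary: "\<forall>i<l. A i \<noteq> B i"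
    and light: "\<forall>i<l. light i \<in> {A i, B i}"
    and inst: "\<forall>i<l. \<forall>t\<in>J i. dom t = {A i, B i}"
    and conn: "query_connected l A B"
  shows "(\<nexists>f. f 0 = init_state \<and> (\<forall>n. jstep l A B light J (f n) (f (Suc n))))
       \<and> (\<forall>s. (jstep l A B light J)\<^sup>*\<^sup>* init_state s \<and> (\<nexists>s'. jstep l A B light J s s')
            \<longrightarrow> (\<exists>c T. comps s = [(c, T)] \<and> T = query_answer l A B J))"
proof (intro conjI allI impI)
  show "\<nexists>f. f 0 = init_state \<and> (\<forall>n. jstep l A B light J (f n) (f (Suc n)))" by (rule no_inf)
next
  fix s
  assume h: "(jstep l A B light J)\<^sup>*\<^sup>* init_state s \<and> (\<nexists>s'. jstep l A B light J s s')"
  have I: "jinv l A B light J s" using reach_inv h inst by blast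
  have cn: "cur s = None" using stuck_cur h by blast
  have allused: "\<forall>i<l. i \<in> used s"
  proof (intro allI impI)
    fix i assume il: "i < l"
    show "i \<in> used s"
    proof (rule ccontr)
      assume nu: "i \<notin> used s"
      have "light i \<in> comp_attrs s" using h jstep.start[of s i l] cn il nu by blast
      then obtain p where "p \<in> set (comps s)" "light i \<in> fst p" unfolding comp_attrs_def by blast
      then show False using I il nu unfolding jinv_def by blast
    qed
  qed
  have allgood: "\<forall>i<l. \<exists>q\<in>set (comps s). good A B J i q"
    using I allused cn unfolding jinv_def by auto
  then have allgood': "\<forall>i<l. \<exists>q\<in>set (comps s). attrs A B i \<subseteq> fst q"
    unfolding good_def by blast
  have ne: "comps s \<noteq> []" using allgood nonempty by fastforce
  have disj: "\<forall>p\<in>set (comps s). \<forall>q\<in>set (comps s). p \<noteq> q \<longrightarrow> fst p \<inter> fst q = {}"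
    and dist: "distinct (comps s)" and PPs: "\<forall>p\<in>set (comps s). PP l A B J p"
    using I unfolding jinv_def by auto
  have inU: "fst p \<subseteq> (\<Union>i<l. attrs A B i)" if "p \<in> set (comps s)" for p
    using PPs that unfolding PP_def by fastforce
  have alleq: "\<forall>p\<in>set (comps s). \<forall>q\<in>set (comps s). p = q"
  proof (intro ballI)
    fix p q assume p: "p \<in> set (comps s)" and q: "q \<in> set (comps s)"
    obtain x where x: "x \<in> fst p" using PPs p unfolding PP_def by blast
    obtain y where y: "y \<in> fst q" using PPs q unfolding PP_def by blast
    have "(x, y) \<in> ({(A i, B i) | i. i < l} \<union> {(B i, A i) | i. i < l})\<^sup>*"
      using conn inU[OF p] inU[OF q] x y unfolding query_connected_def by blast
    then have "y \<in> fst p" using conn_prop[OF _ x p allgood' disj] by blast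
    then show "p = q" using disj p q y by blast
  qed
  have cs: "comps s = [hd (comps s)]" using single_list[OF dist ne alleq] .
  obtain c T where cT: "hd (comps s) = (c, T)" by fastforce
  have mem: "(c, T) \<in> set (comps s)" using cs cT by (metis list.set_intros(1))
  obtain S where S: "S \<subseteq> {..<l}" "c = \<Union>(attrs A B ` S)" "T = jn A B J S c"
  proof -
    have "PP l A B J (c, T)" using PPs mem by blast
    then show ?thesis using that unfolding PP_def fst_conv snd_conv by blast
  qed
  have gi: "\<forall>i<l. good A B J i (c, T)" using allgood cs cT by (metis empty_iff set_ConsD list.set(1))
  have ceq: "c = (\<Union>i<l. attrs A B i)"
    using S(1,2) gi unfolding good_def by auto
  have "T = query_answer l A B J"
  proof
    show "T \<subseteq> query_answer l A B J"
      using gi ceq S(3) unfolding query_answer_def good_def jn_def by auto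
    show "query_answer l A B J \<subseteq> T"
      using ceq S(1,3) unfolding query_answer_def jn_def by auto
  qed
  then show "\<exists>c T. comps s = [(c, T)] \<and> T = query_answer l A B J"
    using cs cT by auto
qed

end
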